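(* Let $\mathcal{A}\subseteq\mathcal{B}$ be sub-$\sigma$-algebras of a complete probability space $(\Omega,\mathcal{F},P)$. Let $x:L_\infty(\mathcal{B})\to L_\infty(\mathcal{A})$ be an $\mathcal{A}$-homogeneous monotone linear operator with $x(1)=1$. The following are equivalent: (1) $x$ is continuous from below; (2) $x$ is continuous from above; (3) $x$ is weak$^*$ continuous, i.e. continuous when both $L_\infty(\mathcal{B})$ and $L_\infty(\mathcal{A})$ carry the weak$^*$ topology.
   Context: $\mathcal{A}$-homogeneous: $x(\lambda X)=\lambda x(X)$ for $\lambda\in L^+_\infty(\mathcal{A})$. Continuous from above (resp. below): for every nonincreasing (resp. nondecreasing) sequence $X_n$ with $P$-a.s. limit $X$, $x(X_n)\to x(X)$ $P$-a.s. monotonically. The weak$^*$ topology on $L_\infty(\mathcal{B})$ is $\sigma(L_\infty(\mathcal{B}),L_1(\mathcal{B}))$, the coarsest topology making $X\mapsto E[fX]$ continuous for every $f\in L_1(\mathcal{B})$; similarly for $L_\infty(\mathcal{A})$. *)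

theory Defs
  imports "HOL-Probability.Probability"
begin

text \<open>Elements of L_infinity are
  identified up to M-almost sure equality; all statements below are made modulo M-null sets.\<close>
definition Linf :: "'a measure \<Rightarrow> 'a measure \<Rightarrow> ('a \<Rightarrow> real) set" where
  "Linf M N = {X. X \<in> borel_measurable N \<and> (\<exists>C. AE \<omega> in M. \<bar>X \<omega>\<bar> \<le> C)}"

definition Linf_pos :: "'a measure \<Rightarrow> 'a measure \<Rightarrow> ('a \<Rightarrow> real) set" where
  "Linf_pos M N = {X \<in> Linf M N. AE \<omega> in M. 0 \<le> X \<omega>}"

definition L1 :: "'a measure \<Rightarrow> 'a measure \<Rightarrow> ('a \<Rightarrow> real) set" where
  "L1 M N = {f. f \<in> borel_measurable N \<and> integrable M f}"

definition weak_star :: "'a measure \<Rightarrow> 'a measure \<Rightarrow> ('a \<Rightarrow> real) topology" where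
  "weak_star M N = topology_generated_by
     {{X \<in> Linf M N. (\<integral>\<omega>. f \<omega> * X \<omega> \<partial>M) \<in> U} | f U. f \<in> L1 M N \<and> open U}"

definition admissible_op ::
  "'a measure \<Rightarrow> 'a measure \<Rightarrow> 'a measure \<Rightarrow> (('a \<Rightarrow> real) \<Rightarrow> ('a \<Rightarrow> real)) \<Rightarrow> bool" where
  "admissible_op M A B x \<longleftrightarrow>
     (\<forall>X \<in> Linf M B. x X \<in> Linf M A)
   \<and> (\<forall>X \<in> Linf M B. \<forall>Y \<in> Linf M B. (AE \<omega> in M. X \<omega> = Y \<omega>) \<longrightarrow> (AE \<omega> in M. x X \<omega> = x Y \<omega>))
   \<and> (\<forall>X \<in> Linf M B. \<forall>Y \<in> Linf M B. \<forall>a b::real.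
        AE \<omega> in M. x (\<lambda>\<omega>. a * X \<omega> + b * Y \<omega>) \<omega> = a * x X \<omega> + b * x Y \<omega>)
   \<and> (\<forall>X \<in> Linf M B. \<forall>Y \<in> Linf M B. (AE \<omega> in M. X \<omega> \<le> Y \<omega>) \<longrightarrow> (AE \<omega> in M. x X \<omega> \<le> x Y \<omega>))
   \<and> (\<forall>l \<in> Linf_pos M A. \<forall>X \<in> Linf M B. AE \<omega> in M. x (\<lambda>\<omega>. l \<omega> * X \<omega>) \<omega> = l \<omega> * x X \<omega>)
   \<and> (AE \<omega> in M. x (\<lambda>_. 1) \<omega> = 1)"

definition cont_from_below ::
  "'a measure \<Rightarrow> 'a measure \<Rightarrow> (('a \<Rightarrow> real) \<Rightarrow> ('a \<Rightarrow> real)) \<Rightarrow> bool" where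
  "cont_from_below M B x \<longleftrightarrow>
     (\<forall>Xs X. (\<forall>n. Xs n \<in> Linf M B) \<and> X \<in> Linf M B
        \<and> (AE \<omega> in M. incseq (\<lambda>n. Xs n \<omega>)) \<and> (AE \<omega> in M. (\<lambda>n. Xs n \<omega>) \<longlonglongrightarrow> X \<omega>)
      \<longrightarrow> (AE \<omega> in M. incseq (\<lambda>n. x (Xs n) \<omega>) \<and> (\<lambda>n. x (Xs n) \<omega>) \<longlonglongrightarrow> x X \<omega>))"

definition cont_from_above ::
  "'a measure \<Rightarrow> 'a measure \<Rightarrow> (('a \<Rightarrow> real) \<Rightarrow> ('a \<Rightarrow> real)) \<Rightarrow> bool" where
  "cont_from_above M B x \<longleftrightarrow>
     (\<forall>Xs X. (\<forall>n. Xs n \<in> Linf M B) \<and> X \<in> Linf M B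
        \<and> (AE \<omega> in M. decseq (\<lambda>n. Xs n \<omega>)) \<and> (AE \<omega> in M. (\<lambda>n. Xs n \<omega>) \<longlonglongrightarrow> X \<omega>)
      \<longrightarrow> (AE \<omega> in M. decseq (\<lambda>n. x (Xs n) \<omega>) \<and> (\<lambda>n. x (Xs n) \<omega>) \<longlonglongrightarrow> x X \<omega>))"

end

theory Submission
  imports Defs
begin


lemma Linf_meas: "X \<in> Linf M N \<Longrightarrow> X \<in> borel_measurable N"
  by (simp add: Linf_def)

lemma Linf_measM: "subalgebra M N \<Longrightarrow> X \<in> Linf M N \<Longrightarrow> X \<in> borel_measurable M"
  by (meson Linf_meas measurable_from_subalg)

lemma Linf_bnd: "X \<in> Linf M N \<Longrightarrow> \<exists>C. AE \<omega> in M. \<bar>X \<omega>\<bar> \<le> C"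
  by (simp add: Linf_def)

lemma LinfI: "X \<in> borel_measurable N \<Longrightarrow> (AE \<omega> in M. \<bar>X \<omega>\<bar> \<le> C) \<Longrightarrow> X \<in> Linf M N"
  by (auto simp: Linf_def)

lemma Linf_const: "(\<lambda>_. c) \<in> Linf M N"
  by (rule LinfI[where C="\<bar>c\<bar>"]) auto

lemma Linf_lin:
  assumes "X \<in> Linf M N" "Y \<in> Linf M N"
  shows "(\<lambda>\<omega>. a * X \<omega> + b * Y \<omega>) \<in> Linf M N"
proof -
  obtain C D where C: "AE \<omega> in M. \<bar>X \<omega>\<bar> \<le> C" and D: "AE \<omega> in M. \<bar>Y \<omega>\<bar> \<le> D"
    using assms Linf_bnd by blast
  have "AE \<omega> in M. \<bar>a * X \<omega> + b * Y \<omega>\<bar> \<le> \<bar>a\<bar> * C + \<bar>b\<bar> * D"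
    using C D
  proof eventually_elim
    case (elim \<omega>)
    have "\<bar>a * X \<omega> + b * Y \<omega>\<bar> \<le> \<bar>a\<bar> * \<bar>X \<omega>\<bar> + \<bar>b\<bar> * \<bar>Y \<omega>\<bar>"
      by (metis abs_mult abs_triangle_ineq)
    also have "\<dots> \<le> \<bar>a\<bar> * C + \<bar>b\<bar> * D"
      using elim by (intro add_mono mult_left_mono) auto
    finally show ?case .
  qed
  moreover have "(\<lambda>\<omega>. a * X \<omega> + b * Y \<omega>) \<in> borel_measurable N"
    using assms by (auto simp: Linf_def)
  ultimately show ?thesis by (rule LinfI[rotated])
qed

lemma Linf_scale: "X \<in> Linf M N \<Longrightarrow> (\<lambda>\<omega>. c * X \<omega>) \<in> Linf M N"
  using Linf_lin[of X M N X c 0] by simp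

lemma Linf_neg: "X \<in> Linf M N \<Longrightarrow> (\<lambda>\<omega>. - X \<omega>) \<in> Linf M N"
  using Linf_scale[of X M N "-1"] by simp

lemma Linf_add: "X \<in> Linf M N \<Longrightarrow> Y \<in> Linf M N \<Longrightarrow> (\<lambda>\<omega>. X \<omega> + Y \<omega>) \<in> Linf M N"
  using Linf_lin[of X M N Y 1 1] by simp

lemma Linf_diff: "X \<in> Linf M N \<Longrightarrow> Y \<in> Linf M N \<Longrightarrow> (\<lambda>\<omega>. X \<omega> - Y \<omega>) \<in> Linf M N"
  using Linf_lin[of X M N Y 1 "-1"] by simp

lemma Linf_ind: "S \<in> sets N \<Longrightarrow> indicator S \<in> Linf M N"
  by (rule LinfI[where C=1]) auto

lemma integrable_Linf:
  assumes "finite_measure M" "subalgebra M N" "X \<in> Linf M N"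
  shows "integrable M X"
proof -
  obtain C where "AE \<omega> in M. \<bar>X \<omega>\<bar> \<le> C" using assms Linf_bnd by blast
  then show ?thesis using assms Linf_measM
    by (intro finite_measure.integrable_const_bound[where B=C]) auto
qed

lemma integrable_mult_Linf:
  assumes "integrable M f" "subalgebra M N" "X \<in> Linf M N"
  shows "integrable M (\<lambda>\<omega>. f \<omega> * X \<omega>)"
proof -
  obtain C where C: "AE \<omega> in M. \<bar>X \<omega>\<bar> \<le> C" using assms Linf_bnd by blast
  show ?thesis
  proof (rule Bochner_Integration.integrable_bound[where f="\<lambda>\<omega>. C * f \<omega>"])
    show "integrable M (\<lambda>\<omega>. C * f \<omega>)" using assms by auto
    show "(\<lambda>\<omega>. f \<omega> * X \<omega>) \<in> borel_measurable M"
      using assms Linf_measM borel_measurable_integrable by (metis borel_measurable_times)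
    show "AE \<omega> in M. norm (f \<omega> * X \<omega>) \<le> norm (C * f \<omega>)"
      using C by eventually_elim (auto simp: abs_mult, metis abs_ge_zero mult.commute mult_right_mono)
  qed
qed

lemma topspace_weak_star: "topspace (weak_star M N) = Linf M N"
proof -
  have "(\<lambda>_. 0) \<in> L1 M N" by (auto simp: L1_def)
  then have "Linf M N \<in> {{X \<in> Linf M N. (\<integral>\<omega>. f \<omega> * X \<omega> \<partial>M) \<in> U} | f U. f \<in> L1 M N \<and> open U}"
    by (intro CollectI exI[of _ "\<lambda>_. 0"] exI[of _ UNIV]) auto
  then show ?thesis unfolding weak_star_def topology_generated_by_topspace by auto
qed



locale opctx =
  fixes M A B :: "'a measure" and x :: "('a \<Rightarrow> real) \<Rightarrow> ('a \<Rightarrow> real)"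
  assumes P: "prob_space M"
    and subA: "subalgebra M A" and subB: "subalgebra M B" and AB: "sets A \<subseteq> sets B"
    and adm: "admissible_op M A B x"
begin

lemma fin: "finite_measure M" using P by (simp add: prob_space_def)

lemma x_in: "X \<in> Linf M B \<Longrightarrow> x X \<in> Linf M A"
  using adm by (simp add: admissible_op_def)

lemma x_cong: "X \<in> Linf M B \<Longrightarrow> Y \<in> Linf M B \<Longrightarrow> (AE \<omega> in M. X \<omega> = Y \<omega>) \<Longrightarrow> AE \<omega> in M. x X \<omega> = x Y \<omega>"
  using adm by (simp add: admissible_op_def)

lemma x_lin: "X \<in> Linf M B \<Longrightarrow> Y \<in> Linf M B \<Longrightarrow>
   AE \<omega> in M. x (\<lambda>\<omega>. a * X \<omega> + b * Y \<omega>) \<omega> = a * x X \<omega> + b * x Y \<omega>"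
  using adm by (simp add: admissible_op_def)

lemma x_mono: "X \<in> Linf M B \<Longrightarrow> Y \<in> Linf M B \<Longrightarrow> (AE \<omega> in M. X \<omega> \<le> Y \<omega>) \<Longrightarrow> AE \<omega> in M. x X \<omega> \<le> x Y \<omega>"
  using adm by (simp add: admissible_op_def)

lemma x_one: "AE \<omega> in M. x (\<lambda>_. 1) \<omega> = 1"
  using adm by (simp add: admissible_op_def)

lemma x_measM: "X \<in> Linf M B \<Longrightarrow> x X \<in> borel_measurable M"
  using x_in Linf_measM subA by blast

lemma x_const: "AE \<omega> in M. x (\<lambda>_. c) \<omega> = c"
proof -
  have "AE \<omega> in M. x (\<lambda>\<omega>. c * 1 + 0 * 1) \<omega> = c * x (\<lambda>_. 1) \<omega> + 0 * x (\<lambda>_. 1) \<omega>"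
    using x_lin[OF Linf_const Linf_const] by blast
  with x_one show ?thesis by eventually_elim simp
qed

lemma x_scale: "X \<in> Linf M B \<Longrightarrow> AE \<omega> in M. x (\<lambda>\<omega>. c * X \<omega>) \<omega> = c * x X \<omega>"
  using x_lin[of X X c 0] by simp

lemma x_add: "X \<in> Linf M B \<Longrightarrow> Y \<in> Linf M B \<Longrightarrow> AE \<omega> in M. x (\<lambda>\<omega>. X \<omega> + Y \<omega>) \<omega> = x X \<omega> + x Y \<omega>"
  using x_lin[of X Y 1 1] by simp

lemma x_diff: "X \<in> Linf M B \<Longrightarrow> Y \<in> Linf M B \<Longrightarrow> AE \<omega> in M. x (\<lambda>\<omega>. X \<omega> - Y \<omega>) \<omega> = x X \<omega> - x Y \<omega>"
  using x_lin[of X Y 1 "-1"] by simp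

lemma x_neg: "X \<in> Linf M B \<Longrightarrow> AE \<omega> in M. x (\<lambda>\<omega>. - X \<omega>) \<omega> = - x X \<omega>"
  using x_scale[of X "-1"] by simp

lemma x_zero: "AE \<omega> in M. x (\<lambda>_. 0) \<omega> = 0"
  using x_const[of 0] by simp

lemma x_bound:
  assumes "X \<in> Linf M B" "AE \<omega> in M. \<bar>X \<omega>\<bar> \<le> C"
  shows "AE \<omega> in M. \<bar>x X \<omega>\<bar> \<le> C"
proof -
  have "AE \<omega> in M. x X \<omega> \<le> x (\<lambda>_. C) \<omega>"
    using assms by (intro x_mono Linf_const) auto
  moreover have "AE \<omega> in M. x (\<lambda>_. -C) \<omega> \<le> x X \<omega>"
    using assms by (intro x_mono Linf_const) auto
  ultimately show ?thesis using x_const[of C] x_const[of "-C"]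
    by eventually_elim auto
qed

lemma x_nonneg:
  assumes "X \<in> Linf M B" "AE \<omega> in M. 0 \<le> X \<omega>"
  shows "AE \<omega> in M. 0 \<le> x X \<omega>"
proof -
  have "AE \<omega> in M. x (\<lambda>_. 0) \<omega> \<le> x X \<omega>"
    using assms by (intro x_mono Linf_const) auto
  then show ?thesis using x_zero by eventually_elim auto
qed

lemma below_above: "cont_from_below M B x \<Longrightarrow> cont_from_above M B x"
  unfolding cont_from_above_def
proof (intro allI impI, elim conjE)
  fix Xs X assume cb: "cont_from_below M B x" and Xs: "\<forall>n. Xs n \<in> Linf M B" and X: "X \<in> Linf M B"
    and dec: "AE \<omega> in M. decseq (\<lambda>n. Xs n \<omega>)" and lim: "AE \<omega> in M. (\<lambda>n. Xs n \<omega>) \<longlonglongrightarrow> X \<omega>"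
  let ?Ys = "\<lambda>n \<omega>. - Xs n \<omega>" and ?Y = "\<lambda>\<omega>. - X \<omega>"
  have Ys: "\<forall>n. ?Ys n \<in> Linf M B" and Y: "?Y \<in> Linf M B"
    using Linf_neg Xs X by auto
  have "AE \<omega> in M. incseq (\<lambda>n. ?Ys n \<omega>)" using dec
    by eventually_elim (simp add: decseq_def incseq_def)
  moreover have "AE \<omega> in M. (\<lambda>n. ?Ys n \<omega>) \<longlonglongrightarrow> ?Y \<omega>" using lim
    by eventually_elim (intro tendsto_minus)
  ultimately have "AE \<omega> in M. incseq (\<lambda>n. x (?Ys n) \<omega>) \<and> (\<lambda>n. x (?Ys n) \<omega>) \<longlonglongrightarrow> x ?Y \<omega>"
    using cb[unfolded cont_from_below_def, THEN spec[of _ ?Ys], THEN spec[of _ ?Y]] Ys Y by blast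
  moreover have "AE \<omega> in M. \<forall>n. x (?Ys n) \<omega> = - x (Xs n) \<omega>"
    using Xs x_neg by (simp add: AE_all_countable)
  moreover have "AE \<omega> in M. x ?Y \<omega> = - x X \<omega>" using X x_neg by simp
  ultimately show "AE \<omega> in M. decseq (\<lambda>n. x (Xs n) \<omega>) \<and> (\<lambda>n. x (Xs n) \<omega>) \<longlonglongrightarrow> x X \<omega>"
  proof eventually_elim
    case (elim \<omega>)
    then have "incseq (\<lambda>n. - x (Xs n) \<omega>)" "(\<lambda>n. - x (Xs n) \<omega>) \<longlonglongrightarrow> - x X \<omega>" by auto
    then show ?case
      by (auto simp: incseq_def decseq_def dest: tendsto_minus)
  qed
qed

lemma above_below: "cont_from_above M B x \<Longrightarrow> cont_from_below M B x"
  unfolding cont_from_below_def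
proof (intro allI impI, elim conjE)
  fix Xs X assume cb: "cont_from_above M B x" and Xs: "\<forall>n. Xs n \<in> Linf M B" and X: "X \<in> Linf M B"
    and dec: "AE \<omega> in M. incseq (\<lambda>n. Xs n \<omega>)" and lim: "AE \<omega> in M. (\<lambda>n. Xs n \<omega>) \<longlonglongrightarrow> X \<omega>"
  let ?Ys = "\<lambda>n \<omega>. - Xs n \<omega>" and ?Y = "\<lambda>\<omega>. - X \<omega>"
  have Ys: "\<forall>n. ?Ys n \<in> Linf M B" and Y: "?Y \<in> Linf M B"
    using Linf_neg Xs X by auto
  have "AE \<omega> in M. decseq (\<lambda>n. ?Ys n \<omega>)" using dec
    by eventually_elim (simp add: decseq_def incseq_def)
  moreover have "AE \<omega> in M. (\<lambda>n. ?Ys n \<omega>) \<longlonglongrightarrow> ?Y \<omega>" using lim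
    by eventually_elim (intro tendsto_minus)
  ultimately have "AE \<omega> in M. decseq (\<lambda>n. x (?Ys n) \<omega>) \<and> (\<lambda>n. x (?Ys n) \<omega>) \<longlonglongrightarrow> x ?Y \<omega>"
    using cb[unfolded cont_from_above_def, THEN spec[of _ ?Ys], THEN spec[of _ ?Y]] Ys Y by blast
  moreover have "AE \<omega> in M. \<forall>n. x (?Ys n) \<omega> = - x (Xs n) \<omega>"
    using Xs x_neg by (simp add: AE_all_countable)
  moreover have "AE \<omega> in M. x ?Y \<omega> = - x X \<omega>" using X x_neg by simp
  ultimately show "AE \<omega> in M. incseq (\<lambda>n. x (Xs n) \<omega>) \<and> (\<lambda>n. x (Xs n) \<omega>) \<longlonglongrightarrow> x X \<omega>"
  proof eventually_elim
    case (elim \<omega>)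
    then have "decseq (\<lambda>n. - x (Xs n) \<omega>)" "(\<lambda>n. - x (Xs n) \<omega>) \<longlonglongrightarrow> - x X \<omega>" by auto
    then show ?case
      by (auto simp: incseq_def decseq_def dest: tendsto_minus)
  qed
qed

end


lemma conv_gen:
  assumes Xs: "\<And>n. Xs n \<in> Linf M N" and X: "X \<in> Linf M N"
    and lim: "\<And>f. f \<in> L1 M N \<Longrightarrow> (\<lambda>n. \<integral>\<omega>. f \<omega> * Xs n \<omega> \<partial>M) \<longlonglongrightarrow> (\<integral>\<omega>. f \<omega> * X \<omega> \<partial>M)"
    and U: "openin (weak_star M N) U" and XU: "X \<in> U"
  shows "eventually (\<lambda>n. Xs n \<in> U) sequentially"
proof -
  have "generate_topology_on {{X \<in> Linf M N. (\<integral>\<omega>. f \<omega> * X \<omega> \<partial>M) \<in> U} | f U. f \<in> L1 M N \<and> open U} U"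
    using U unfolding weak_star_def by (rule openin_topology_generated_by)
  then show ?thesis using XU
  proof (induction arbitrary: )
    case Empty then show ?case by simp
  next
    case (Int a b) then show ?case by (auto intro: eventually_conj)
  next
    case (UN K)
    then obtain k where "k \<in> K" "X \<in> k" by auto
    with UN have "eventually (\<lambda>n. Xs n \<in> k) sequentially" by auto
    then show ?case by eventually_elim (use \<open>k \<in> K\<close> in auto)
  next
    case (Basis s)
    then obtain f V where s: "s = {X \<in> Linf M N. (\<integral>\<omega>. f \<omega> * X \<omega> \<partial>M) \<in> V}" and f: "f \<in> L1 M N" and V: "open V"
      by auto
    have "(\<integral>\<omega>. f \<omega> * X \<omega> \<partial>M) \<in> V" using Basis s by auto
    then have "eventually (\<lambda>n. (\<integral>\<omega>. f \<omega> * Xs n \<omega> \<partial>M) \<in> V) sequentially"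
      using topological_tendstoD[OF lim[OF f] V] by blast
    then show ?case unfolding s by eventually_elim (use Xs in auto)
  qed
qed

context opctx begin

lemma weak_above:
  assumes cm: "continuous_map (weak_star M B) (weak_star M A) x"
  shows "cont_from_above M B x"
  unfolding cont_from_above_def
proof (intro allI impI, elim conjE)
  fix Xs X assume Xs: "\<forall>n. Xs n \<in> Linf M B" and X: "X \<in> Linf M B"
    and dec: "AE \<omega> in M. decseq (\<lambda>n. Xs n \<omega>)" and lim: "AE \<omega> in M. (\<lambda>n. Xs n \<omega>) \<longlonglongrightarrow> X \<omega>"
  obtain C0 where C0: "AE \<omega> in M. \<bar>Xs 0 \<omega>\<bar> \<le> C0" using Xs Linf_bnd by blast
  obtain C1 where C1: "AE \<omega> in M. \<bar>X \<omega>\<bar> \<le> C1" using X Linf_bnd by blast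
  have le: "AE \<omega> in M. \<forall>n. X \<omega> \<le> Xs n \<omega>" using dec lim
  proof eventually_elim
    case (elim \<omega>)
    show ?case
    proof
      fix m show "X \<omega> \<le> Xs m \<omega>"
        using elim by (intro LIMSEQ_le_const2[of "\<lambda>n. Xs n \<omega>"]) (auto simp: decseq_def)
    qed
  qed
  have bnd: "AE \<omega> in M. \<forall>n. \<bar>Xs n \<omega>\<bar> \<le> C0 + C1" using dec C0 C1 le
  proof eventually_elim
    case (elim \<omega>)
    show ?case
    proof
      fix n
      have "Xs n \<omega> \<le> Xs 0 \<omega>" using elim(1) by (auto simp: decseq_def)
      moreover have "X \<omega> \<le> Xs n \<omega>" using elim(4) by auto
      ultimately show "\<bar>Xs n \<omega>\<bar> \<le> C0 + C1" using elim(2,3) by (auto simp: abs_le_iff)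
    qed
  qed
  have conv: "(\<lambda>n. \<integral>\<omega>. f \<omega> * Xs n \<omega> \<partial>M) \<longlonglongrightarrow> (\<integral>\<omega>. f \<omega> * X \<omega> \<partial>M)" if f: "f \<in> L1 M B" for f
  proof (rule integral_dominated_convergence[where w="\<lambda>\<omega>. \<bar>f \<omega>\<bar> * (C0 + C1)"])
    have fm: "f \<in> borel_measurable M" using f subB by (auto simp: L1_def intro: measurable_from_subalg)
    show "(\<lambda>\<omega>. f \<omega> * X \<omega>) \<in> borel_measurable M" by (intro borel_measurable_times fm Linf_measM[OF subB X])
    show "(\<lambda>\<omega>. f \<omega> * Xs n \<omega>) \<in> borel_measurable M" for n
      using Xs by (intro borel_measurable_times fm Linf_measM[OF subB]) auto
    show "integrable M (\<lambda>\<omega>. \<bar>f \<omega>\<bar> * (C0 + C1))" using f by (auto simp: L1_def)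
    show "AE \<omega> in M. (\<lambda>n. f \<omega> * Xs n \<omega>) \<longlonglongrightarrow> f \<omega> * X \<omega>" using lim
      by eventually_elim (rule tendsto_mult[OF tendsto_const])
    show "AE \<omega> in M. norm (f \<omega> * Xs n \<omega>) \<le> \<bar>f \<omega>\<bar> * (C0 + C1)" for n using bnd
    proof eventually_elim
      case (elim \<omega>)
      then have "\<bar>Xs n \<omega>\<bar> \<le> C0 + C1" by blast
      then show ?case by (simp add: abs_mult mult_left_mono)
    qed
  qed
  have evx: "eventually (\<lambda>n. x (Xs n) \<in> U) sequentially" if U: "openin (weak_star M A) U" and xU: "x X \<in> U" for U
  proof -
    have op: "openin (weak_star M B) {Y \<in> topspace (weak_star M B). x Y \<in> U}"
      using cm U unfolding continuous_map_def by blast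
    have XU: "X \<in> {Y \<in> topspace (weak_star M B). x Y \<in> U}"
      using xU X by (simp add: topspace_weak_star)
    have "eventually (\<lambda>n. Xs n \<in> {Y \<in> topspace (weak_star M B). x Y \<in> U}) sequentially"
      using conv_gen[where N=B, OF _ X conv op XU] Xs by blast
    then show ?thesis by eventually_elim auto
  qed
  have one: "(\<lambda>_. 1) \<in> L1 M A" using finite_measure.integrable_const[OF fin] by (auto simp: L1_def)
  have intconv: "(\<lambda>n. \<integral>\<omega>. x (Xs n) \<omega> \<partial>M) \<longlonglongrightarrow> (\<integral>\<omega>. x X \<omega> \<partial>M)"
  proof (rule topological_tendstoI)
    fix W assume W: "open W" "(\<integral>\<omega>. x X \<omega> \<partial>M) \<in> W"
    have "openin (weak_star M A) {Y \<in> Linf M A. (\<integral>\<omega>. 1 * Y \<omega> \<partial>M) \<in> W}"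
      unfolding weak_star_def
      by (rule topology_generated_by_Basis) (intro CollectI exI[of _ "\<lambda>_. 1"] exI[of _ W], use one W in auto)
    moreover have "x X \<in> {Y \<in> Linf M A. (\<integral>\<omega>. 1 * Y \<omega> \<partial>M) \<in> W}" using W x_in X by auto
    ultimately have "eventually (\<lambda>n. x (Xs n) \<in> {Y \<in> Linf M A. (\<integral>\<omega>. 1 * Y \<omega> \<partial>M) \<in> W}) sequentially"
      by (rule evx)
    then show "eventually (\<lambda>n. (\<integral>\<omega>. x (Xs n) \<omega> \<partial>M) \<in> W) sequentially"
      by eventually_elim auto
  qed
  have xdec: "AE \<omega> in M. \<forall>m n. m \<le> n \<longrightarrow> x (Xs n) \<omega> \<le> x (Xs m) \<omega>"
  proof -
    have "AE \<omega> in M. x (Xs n) \<omega> \<le> x (Xs m) \<omega>" if "m \<le> n" for m n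
    proof (rule x_mono[OF Xs[rule_format] Xs[rule_format]])
      show "AE \<omega> in M. Xs n \<omega> \<le> Xs m \<omega>" using dec
        by eventually_elim (use that in \<open>simp add: decseq_def\<close>)
    qed
    then show ?thesis by (auto simp: AE_all_countable)
  qed
  have xle: "AE \<omega> in M. \<forall>n. x X \<omega> \<le> x (Xs n) \<omega>"
  proof -
    have "AE \<omega> in M. x X \<omega> \<le> x (Xs n) \<omega>" for n
    proof (rule x_mono[OF X Xs[rule_format]])
      show "AE \<omega> in M. X \<omega> \<le> Xs n \<omega>" using le
        by eventually_elim simp
    qed
    then show ?thesis by (auto simp: AE_all_countable)
  qed
  define E where "E n \<omega> = ennreal (x (Xs n) \<omega> - x X \<omega>)" for n \<omega>
  have Em[measurable]: "E n \<in> borel_measurable M" for n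
    unfolding E_def by (rule measurable_compose[OF borel_measurable_diff[OF x_measM[OF Xs[rule_format]] x_measM[OF X]] measurable_ennreal])
  have intE: "(\<integral>\<^sup>+\<omega>. E n \<omega> \<partial>M) = ennreal ((\<integral>\<omega>. x (Xs n) \<omega> \<partial>M) - (\<integral>\<omega>. x X \<omega> \<partial>M))" for n
  proof -
    have i1: "integrable M (x (Xs n))" "integrable M (x X)"
      using integrable_Linf[OF fin subA] x_in Xs X by auto
    have "(\<integral>\<^sup>+\<omega>. E n \<omega> \<partial>M) = ennreal (\<integral>\<omega>. x (Xs n) \<omega> - x X \<omega> \<partial>M)"
      unfolding E_def
    proof (rule nn_integral_eq_integral)
      show "integrable M (\<lambda>\<omega>. x (Xs n) \<omega> - x X \<omega>)" using i1 by (rule Bochner_Integration.integrable_diff)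
      show "AE \<omega> in M. 0 \<le> x (Xs n) \<omega> - x X \<omega>" using xle by eventually_elim simp
    qed
    then show ?thesis using i1 by simp
  qed
  have "(\<integral>\<^sup>+\<omega>. (INF n. E n \<omega>) \<partial>M) \<le> 0"
  proof (rule LIMSEQ_le_const)
    show "(\<lambda>n. ennreal ((\<integral>\<omega>. x (Xs n) \<omega> \<partial>M) - (\<integral>\<omega>. x X \<omega> \<partial>M))) \<longlonglongrightarrow> 0"
      using tendsto_ennrealI[OF LIM_zero[OF intconv]] by simp
    show "\<exists>N. \<forall>n\<ge>N. (\<integral>\<^sup>+\<omega>. (INF n. E n \<omega>) \<partial>M) \<le> ennreal ((\<integral>\<omega>. x (Xs n) \<omega> \<partial>M) - (\<integral>\<omega>. x X \<omega> \<partial>M))"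
      unfolding intE[symmetric] by (intro exI[of _ 0] allI impI nn_integral_mono INF_lower) simp
  qed
  then have "AE \<omega> in M. (INF n. E n \<omega>) = 0"
    by (subst nn_integral_0_iff_AE[symmetric]) auto
  moreover have "AE \<omega> in M. \<forall>n. x (Xs n) \<omega> = x (Xs n) \<omega>" by simp
  ultimately show "AE \<omega> in M. decseq (\<lambda>n. x (Xs n) \<omega>) \<and> (\<lambda>n. x (Xs n) \<omega>) \<longlonglongrightarrow> x X \<omega>"
    using xdec xle
  proof eventually_elim
    case (elim \<omega>)
    have ds: "decseq (\<lambda>n. x (Xs n) \<omega>)" using elim by (auto simp: decseq_def)
    then obtain L where L: "(\<lambda>n. x (Xs n) \<omega>) \<longlonglongrightarrow> L" "\<forall>i. L \<le> x (Xs i) \<omega>"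
      using elim decseq_convergent[of "\<lambda>n. x (Xs n) \<omega>" "x X \<omega>"] by blast
    have "x X \<omega> \<le> L" using elim L by (intro LIMSEQ_le_const[OF L(1)]) auto
    moreover have "ennreal (L - x X \<omega>) \<le> (INF n. E n \<omega>)"
      unfolding E_def using L by (intro INF_greatest ennreal_leI) auto
    then have "L - x X \<omega> \<le> 0" using elim by (simp add: ennreal_eq_0_iff)
    ultimately have "L = x X \<omega>" by simp
    with ds L show ?case by simp
  qed
qed

end


locale posctx = opctx +
  fixes f :: "'a \<Rightarrow> real"
  assumes cb: "cont_from_below M B x" and fL1: "f \<in> L1 M A" and fpos: "\<And>\<omega>. 0 \<le> f \<omega>"
begin

lemma fA: "f \<in> borel_measurable A" using fL1 by (simp add: L1_def)
lemma fM: "f \<in> borel_measurable M" using fA subA measurable_from_subalg by blast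
lemma fint: "integrable M f" using fL1 by (simp add: L1_def)
lemma spB: "space B = space M" using subB by (simp add: subalgebra_def)

definition \<nu> :: "'a set \<Rightarrow> ennreal" where
  "\<nu> S = (\<integral>\<^sup>+\<omega>. ennreal (f \<omega> * x (indicator S) \<omega>) \<partial>M)"

lemma xind_nn: "S \<in> sets B \<Longrightarrow> AE \<omega> in M. 0 \<le> x (indicator S) \<omega>"
  by (rule x_nonneg[OF Linf_ind]) auto

lemma meas_fx: "X \<in> Linf M B \<Longrightarrow> (\<lambda>\<omega>. f \<omega> * x X \<omega>) \<in> borel_measurable M"
  by (intro borel_measurable_times fM x_measM)

lemma \<nu>_empty: "\<nu> {} = 0"
proof -
  have e: "indicator {} = (\<lambda>_. 0::real)" by (rule ext) simp
  have "\<nu> {} = (\<integral>\<^sup>+\<omega>. 0 \<partial>M)"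
    unfolding \<nu>_def e using x_zero by (intro nn_integral_cong_AE) (auto elim!: eventually_mono)
  then show ?thesis by simp
qed

lemma \<nu>_ca: "countably_additive (sets B) \<nu>"
  unfolding countably_additive_def
proof (intro allI impI)
  fix S :: "nat \<Rightarrow> 'a set"
  assume S: "range S \<subseteq> sets B" and dj: "disjoint_family S" and U: "\<Union> (range S) \<in> sets B"
  define T where "T n = \<Union> (S ` {..<n})" for n
  have TB: "T n \<in> sets B" for n unfolding T_def using S by auto
  have SB: "S i \<in> sets B" for i using S by auto
  have indT: "indicator (T (Suc n)) = (\<lambda>\<omega>. indicator (T n) \<omega> + indicator (S n) \<omega> :: real)" for n :: nat
  proof -
    have TS: "T (Suc n) = T n \<union> S n" unfolding T_def by (auto simp: lessThan_Suc)
    have dis: "T n \<inter> S n = {}" using dj unfolding T_def disjoint_family_on_def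
      by (auto, metis IntI empty_iff less_irrefl)
    show ?thesis unfolding TS by (rule ext, rule indicator_disj_union[OF dis])
  qed
  have sumT: "AE \<omega> in M. x (indicator (T n)) \<omega> = (\<Sum>i<n. x (indicator (S i)) \<omega>)" for n
  proof (induction n)
    case 0
    have "indicator (T 0) = (\<lambda>_. 0::real)" unfolding T_def by auto
    then show ?case using x_zero by simp
  next
    case (Suc n)
    have "AE \<omega> in M. x (\<lambda>\<omega>. indicator (T n) \<omega> + indicator (S n) \<omega>) \<omega> = x (indicator (T n)) \<omega> + x (indicator (S n)) \<omega>"
      using TB SB by (intro x_add Linf_ind)
    with Suc show ?case unfolding indT by eventually_elim simp
  qed
  have lim: "AE \<omega> in M. incseq (\<lambda>n. x (indicator (T n)) \<omega>) \<and> (\<lambda>n. x (indicator (T n)) \<omega>) \<longlonglongrightarrow> x (indicator (\<Union> (range S))) \<omega>"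
  proof -
    have "incseq (\<lambda>n. (indicator (T n) \<omega> :: real))" for \<omega>
      unfolding T_def by (intro monoI) (auto simp: indicator_def)
    moreover have "(\<lambda>n. (indicator (T n) \<omega> :: real)) \<longlonglongrightarrow> indicator (\<Union> (range S)) \<omega>" for \<omega>
      unfolding T_def by (rule LIMSEQ_indicator_UN)
    ultimately show ?thesis
      using cb[unfolded cont_from_below_def, THEN spec[of _ "\<lambda>n. indicator (T n)"], THEN spec[of _ "indicator (\<Union> (range S))"]]
        Linf_ind[OF TB, where M=M] Linf_ind[OF U, where M=M] by auto
  qed
  have sums: "AE \<omega> in M. (\<Sum>i. ennreal (f \<omega> * x (indicator (S i)) \<omega>)) = ennreal (f \<omega> * x (indicator (\<Union> (range S))) \<omega>)"
  proof -
    have "AE \<omega> in M. \<forall>n. x (indicator (T n)) \<omega> = (\<Sum>i<n. x (indicator (S i)) \<omega>)"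
      using sumT by (simp add: AE_all_countable)
    moreover have "AE \<omega> in M. \<forall>i. 0 \<le> x (indicator (S i)) \<omega>"
      using xind_nn SB by (simp add: AE_all_countable)
    ultimately show ?thesis using lim
    proof eventually_elim
      case (elim \<omega>)
      then have "(\<lambda>i. x (indicator (S i)) \<omega>) sums x (indicator (\<Union> (range S))) \<omega>"
        unfolding sums_def by simp
      then have "(\<lambda>i. f \<omega> * x (indicator (S i)) \<omega>) sums (f \<omega> * x (indicator (\<Union> (range S))) \<omega>)"
        by (rule sums_mult)
      then show ?case using elim fpos by (intro suminf_ennreal_eq) auto
    qed
  qed
  have "(\<Sum>i. \<nu> (S i)) = (\<integral>\<^sup>+\<omega>. (\<Sum>i. ennreal (f \<omega> * x (indicator (S i)) \<omega>)) \<partial>M)"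
    unfolding \<nu>_def
    by (rule nn_integral_suminf[symmetric]) (intro measurable_compose[OF meas_fx measurable_ennreal] Linf_ind SB)
  also have "\<dots> = \<nu> (\<Union> (range S))"
    unfolding \<nu>_def using sums by (rule nn_integral_cong_AE)
  finally show "(\<Sum>i. \<nu> (S i)) = \<nu> (\<Union> (range S))" .
qed

definition N where "N = measure_of (space M) (sets B) \<nu>"

lemma saB: "sigma_algebra (space M) (sets B)"
  using sets.sigma_algebra_axioms[of B] spB by simp

lemma emN: "S \<in> sets B \<Longrightarrow> emeasure N S = \<nu> S"
  unfolding N_def using saB \<nu>_empty \<nu>_ca
  by (intro emeasure_measure_of_sigma) (auto simp: positive_def)

lemma setsN: "sets N = sets B"
  unfolding N_def using saB by (rule sigma_algebra.sets_measure_of_eq)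

abbreviation "R \<equiv> restr_to_subalg M B"

lemma ac: "absolutely_continuous R N"
  unfolding absolutely_continuous_def
proof
  fix S assume "S \<in> null_sets R"
  then have S: "S \<in> null_sets M" "S \<in> sets B" using null_sets_restr_to_subalg[OF subB] by auto
  have "AE \<omega> in M. x (indicator S) \<omega> = x (\<lambda>_. 0) \<omega>"
    using AE_not_in[OF S(1)] S by (intro x_cong Linf_ind Linf_const) (auto elim!: eventually_mono)
  then have "AE \<omega> in M. x (indicator S) \<omega> = 0" using x_zero by eventually_elim simp
  then have "\<nu> S = (\<integral>\<^sup>+\<omega>. 0 \<partial>M)"
    unfolding \<nu>_def by (intro nn_integral_cong_AE) (auto elim!: eventually_mono)
  then have "emeasure N S = 0" using emN S by simp
  then show "S \<in> null_sets N" using S setsN by (auto intro: null_setsI)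
qed

lemma RN: obtains h where "h \<in> borel_measurable B" "\<And>S. S \<in> sets B \<Longrightarrow> (\<integral>\<^sup>+\<omega>. h \<omega> * indicator S \<omega> \<partial>M) = \<nu> S"
proof -
  have sf: "sigma_finite_measure R"
    by (rule prob_space_imp_sigma_finite[OF prob_space_restr_to_subalg[OF subB P]])
  have "sets N = sets R" using setsN sets_restr_to_subalg[OF subB] by simp
  then obtain h where h: "h \<in> borel_measurable R" "density R h = N"
    using sigma_finite_measure.Radon_Nikodym[OF sf ac] by blast
  have hB: "h \<in> borel_measurable B" using measurable_in_subalg'[OF subB h(1)] .
  show ?thesis
  proof (rule that[OF hB])
    fix S assume S: "S \<in> sets B"
    have "\<nu> S = emeasure (density R h) S" using h(2) emN S by simp
    also have "\<dots> = (\<integral>\<^sup>+\<omega>. h \<omega> * indicator S \<omega> \<partial>R)"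
      using S h(1) by (intro emeasure_density) (auto simp: sets_restr_to_subalg[OF subB])
    also have "\<dots> = (\<integral>\<^sup>+\<omega>. h \<omega> * indicator S \<omega> \<partial>M)"
      using S hB by (intro nn_integral_subalgebra2[OF subB]) auto
    finally show "(\<integral>\<^sup>+\<omega>. h \<omega> * indicator S \<omega> \<partial>M) = \<nu> S" by simp
  qed
qed

end


context posctx begin

lemma \<nu>_space: "\<nu> (space M) = ennreal (\<integral>\<omega>. f \<omega> \<partial>M)"
proof -
  have "AE \<omega> in M. x (indicator (space M)) \<omega> = x (\<lambda>_. 1) \<omega>"
    by (intro x_cong Linf_ind Linf_const) (auto simp: spB[symmetric])
  then have "AE \<omega> in M. x (indicator (space M)) \<omega> = 1" using x_one by eventually_elim simp
  then have "\<nu> (space M) = (\<integral>\<^sup>+\<omega>. ennreal (f \<omega>) \<partial>M)"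
    unfolding \<nu>_def by (intro nn_integral_cong_AE) (auto elim!: eventually_mono)
  also have "\<dots> = ennreal (\<integral>\<omega>. f \<omega> \<partial>M)" using fint fpos by (intro nn_integral_eq_integral) auto
  finally show ?thesis .
qed

lemma exists_g: "\<exists>g. g \<in> L1 M B \<and> (\<forall>u. u \<in> borel_measurable B \<longrightarrow> (\<forall>\<omega>. 0 \<le> u \<omega>) \<longrightarrow>
   (\<forall>C. (\<forall>\<omega>\<in>space M. u \<omega> \<le> C) \<longrightarrow> (\<integral>\<omega>. f \<omega> * x u \<omega> \<partial>M) = (\<integral>\<omega>. g \<omega> * u \<omega> \<partial>M)))"
proof -
  obtain h where hB: "h \<in> borel_measurable B" and hS: "\<And>S. S \<in> sets B \<Longrightarrow> (\<integral>\<^sup>+\<omega>. h \<omega> * indicator S \<omega> \<partial>M) = \<nu> S"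
    using RN by blast
  have hM: "h \<in> borel_measurable M" using hB subB measurable_from_subalg by blast
  have "(\<integral>\<^sup>+\<omega>. h \<omega> \<partial>M) = (\<integral>\<^sup>+\<omega>. h \<omega> * indicator (space M) \<omega> \<partial>M)"
    by (intro nn_integral_cong) auto
  also have "\<dots> = \<nu> (space M)" using hS[of "space M"] spB by (metis sets.top)
  finally have hint: "(\<integral>\<^sup>+\<omega>. h \<omega> \<partial>M) = ennreal (\<integral>\<omega>. f \<omega> \<partial>M)" using \<nu>_space by simp
  have hfin: "AE \<omega> in M. h \<omega> \<noteq> \<infinity>" using hM hint by (intro nn_integral_PInf_AE) auto
  define g where "g \<omega> = enn2real (h \<omega>)" for \<omega>
  have gB: "g \<in> borel_measurable B" unfolding g_def using hB by measurable
  have gM: "g \<in> borel_measurable M" using gB subB measurable_from_subalg by blast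
  have gpos: "0 \<le> g \<omega>" for \<omega> unfolding g_def by simp
  have hg: "AE \<omega> in M. h \<omega> = ennreal (g \<omega>)" using hfin unfolding g_def
    by eventually_elim (simp add: ennreal_enn2real_if)
  have gint: "integrable M g"
  proof (rule integrableI_bounded)
    show "g \<in> borel_measurable M" by (rule gM)
    have "(\<integral>\<^sup>+\<omega>. ennreal (norm (g \<omega>)) \<partial>M) = (\<integral>\<^sup>+\<omega>. h \<omega> \<partial>M)"
      using hg gpos by (intro nn_integral_cong_AE) (auto elim!: eventually_mono)
    then show "(\<integral>\<^sup>+\<omega>. ennreal (norm (g \<omega>)) \<partial>M) < \<infinity>" using hint by simp
  qed
  have gL1: "g \<in> L1 M B" using gB gint by (simp add: L1_def)
  have Linf_bdd: "u \<in> Linf M B" if "u \<in> borel_measurable B" "\<And>\<omega>. 0 \<le> u \<omega>" "\<forall>\<omega>\<in>space M. u \<omega> \<le> C" for u C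
    using that by (intro LinfI[where C=C]) (auto intro!: AE_I2)
  have ind: "(\<integral>\<omega>. f \<omega> * x (indicator S) \<omega> \<partial>M) = (\<integral>\<omega>. g \<omega> * indicator S \<omega> \<partial>M)" if S: "S \<in> sets B" for S
  proof -
    have "(\<integral>\<omega>. f \<omega> * x (indicator S) \<omega> \<partial>M) = enn2real (\<nu> S)"
      unfolding \<nu>_def using xind_nn[OF S] fpos
      by (intro integral_eq_nn_integral meas_fx Linf_ind S) (auto elim!: eventually_mono)
    also have "\<nu> S = (\<integral>\<^sup>+\<omega>. ennreal (g \<omega> * indicator S \<omega>) \<partial>M)"
      unfolding hS[OF S, symmetric] using hg
      by (intro nn_integral_cong_AE) (auto elim!: eventually_mono simp: indicator_def)
    also have "enn2real \<dots> = (\<integral>\<omega>. g \<omega> * indicator S \<omega> \<partial>M)"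
      using gpos gM gB S subB
      by (intro integral_eq_nn_integral[symmetric]) (auto intro!: AE_I2 borel_measurable_times measurable_from_subalg[OF subB])
    finally show ?thesis .
  qed
  show ?thesis
  proof (rule exI[of _ g], rule conjI[OF gL1], rule allI, rule impI, rule impI)
    fix u :: "'a \<Rightarrow> real" assume uB: "u \<in> borel_measurable B" and upos: "\<forall>\<omega>. 0 \<le> u \<omega>"
    have usp: "u \<in> borel_measurable B" "\<And>\<omega>. 0 \<le> u \<omega>" using uB upos by auto
    show "\<forall>C. (\<forall>\<omega>\<in>space M. u \<omega> \<le> C) \<longrightarrow> (\<integral>\<omega>. f \<omega> * x u \<omega> \<partial>M) = (\<integral>\<omega>. g \<omega> * u \<omega> \<partial>M)"
      using usp
    proof (induction rule: borel_measurable_induct_real)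
      case (set S)
      then show ?case using ind by blast
    next
      case (mult u c)
      show ?case
      proof (intro allI impI)
        fix C assume bd: "\<forall>\<omega>\<in>space M. c * u \<omega> \<le> C"
        show "(\<integral>\<omega>. f \<omega> * x (\<lambda>\<omega>. c * u \<omega>) \<omega> \<partial>M) = (\<integral>\<omega>. g \<omega> * (c * u \<omega>) \<partial>M)"
        proof (cases "c = 0")
          case True
          have "AE \<omega> in M. f \<omega> * x (\<lambda>_. 0) \<omega> = 0" using x_zero by eventually_elim simp
          then have "(\<integral>\<omega>. f \<omega> * x (\<lambda>_. 0) \<omega> \<partial>M) = (\<integral>\<omega>. 0 \<partial>M)"
            by (rule integral_cong_AE[OF meas_fx[OF Linf_const] borel_measurable_const])
          then show ?thesis using True by simp
        next
          case False
          then have cpos: "0 < c" using mult(1) by simp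
          have ub: "\<forall>\<omega>\<in>space M. u \<omega> \<le> C / c"
          proof
            fix \<omega> assume w: "\<omega> \<in> space M"
            have "c * u \<omega> \<le> C" using bd w by blast
            then show "u \<omega> \<le> C / c" using cpos by (simp add: pos_le_divide_eq mult.commute)
          qed
          have uL: "u \<in> Linf M B" by (rule Linf_bdd[OF mult(2) mult(3) ub])
          have IH: "(\<integral>\<omega>. f \<omega> * x u \<omega> \<partial>M) = (\<integral>\<omega>. g \<omega> * u \<omega> \<partial>M)" using mult(4) ub by blast
          have "AE \<omega> in M. f \<omega> * x (\<lambda>\<omega>. c * u \<omega>) \<omega> = c * (f \<omega> * x u \<omega>)"
            using x_scale[OF uL, of c] by eventually_elim simp
          then have "(\<integral>\<omega>. f \<omega> * x (\<lambda>\<omega>. c * u \<omega>) \<omega> \<partial>M) = (\<integral>\<omega>. c * (f \<omega> * x u \<omega>) \<partial>M)"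
            by (rule integral_cong_AE[OF meas_fx[OF Linf_scale[OF uL]] borel_measurable_times[OF borel_measurable_const meas_fx[OF uL]]])
          also have "\<dots> = c * (\<integral>\<omega>. g \<omega> * u \<omega> \<partial>M)" unfolding integral_mult_right_zero IH ..
          also have "\<dots> = (\<integral>\<omega>. c * (g \<omega> * u \<omega>) \<partial>M)" unfolding integral_mult_right_zero ..
          also have "(\<lambda>\<omega>. c * (g \<omega> * u \<omega>)) = (\<lambda>\<omega>. g \<omega> * (c * u \<omega>))" by (simp add: mult.left_commute)
          finally show ?thesis .
        qed
      qed
    next
      case (add u v)
      show ?case
      proof (intro allI impI)
        fix C assume bd: "\<forall>\<omega>\<in>space M. v \<omega> + u \<omega> \<le> C"
        have ub: "\<forall>\<omega>\<in>space M. u \<omega> \<le> C"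
        proof
          fix \<omega> assume w: "\<omega> \<in> space M"
          have "v \<omega> + u \<omega> \<le> C" using bd w by blast
          then show "u \<omega> \<le> C" using add(4)[of \<omega>] by linarith
        qed
        have vb: "\<forall>\<omega>\<in>space M. v \<omega> \<le> C"
        proof
          fix \<omega> assume w: "\<omega> \<in> space M"
          have "v \<omega> + u \<omega> \<le> C" using bd w by blast
          then show "v \<omega> \<le> C" using add(2)[of \<omega>] by linarith
        qed
        have uL: "u \<in> Linf M B" by (rule Linf_bdd[OF add(1) add(2) ub])
        have vL: "v \<in> Linf M B" by (rule Linf_bdd[OF add(3) add(4) vb])
        have IHu: "(\<integral>\<omega>. f \<omega> * x u \<omega> \<partial>M) = (\<integral>\<omega>. g \<omega> * u \<omega> \<partial>M)" using add(6) ub by blast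
        have IHv: "(\<integral>\<omega>. f \<omega> * x v \<omega> \<partial>M) = (\<integral>\<omega>. g \<omega> * v \<omega> \<partial>M)" using add(7) vb by blast
        have i1: "integrable M (\<lambda>\<omega>. f \<omega> * x v \<omega>)" "integrable M (\<lambda>\<omega>. f \<omega> * x u \<omega>)"
          by (rule integrable_mult_Linf[OF fint subA x_in[OF vL]], rule integrable_mult_Linf[OF fint subA x_in[OF uL]])
        have i2: "integrable M (\<lambda>\<omega>. g \<omega> * v \<omega>)" "integrable M (\<lambda>\<omega>. g \<omega> * u \<omega>)"
          by (rule integrable_mult_Linf[OF gint subB vL], rule integrable_mult_Linf[OF gint subB uL])
        have "AE \<omega> in M. f \<omega> * x (\<lambda>\<omega>. v \<omega> + u \<omega>) \<omega> = f \<omega> * x v \<omega> + f \<omega> * x u \<omega>"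
          using x_add[OF vL uL] by eventually_elim (simp add: distrib_left)
        then have "(\<integral>\<omega>. f \<omega> * x (\<lambda>\<omega>. v \<omega> + u \<omega>) \<omega> \<partial>M) = (\<integral>\<omega>. f \<omega> * x v \<omega> + f \<omega> * x u \<omega> \<partial>M)"
          by (rule integral_cong_AE[OF meas_fx[OF Linf_add[OF vL uL]] borel_measurable_add[OF meas_fx[OF vL] meas_fx[OF uL]]])
        also have "\<dots> = (\<integral>\<omega>. f \<omega> * x v \<omega> \<partial>M) + (\<integral>\<omega>. f \<omega> * x u \<omega> \<partial>M)"
          using i1 by (rule Bochner_Integration.integral_add)
        also have "\<dots> = (\<integral>\<omega>. g \<omega> * v \<omega> \<partial>M) + (\<integral>\<omega>. g \<omega> * u \<omega> \<partial>M)" unfolding IHu IHv ..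
        also have "\<dots> = (\<integral>\<omega>. g \<omega> * v \<omega> + g \<omega> * u \<omega> \<partial>M)"
          using i2 by (rule Bochner_Integration.integral_add[symmetric])
        also have "(\<lambda>\<omega>. g \<omega> * v \<omega> + g \<omega> * u \<omega>) = (\<lambda>\<omega>. g \<omega> * (v \<omega> + u \<omega>))" by (simp add: distrib_left)
        finally show "(\<integral>\<omega>. f \<omega> * x (\<lambda>\<omega>. v \<omega> + u \<omega>) \<omega> \<partial>M) = (\<integral>\<omega>. g \<omega> * (v \<omega> + u \<omega>) \<partial>M)" .
      qed
    next
      case (seq U)
      show ?case
      proof (intro allI impI)
        fix C assume bd: "\<forall>\<omega>\<in>space M. u \<omega> \<le> C"
        have Ule: "U i \<omega> \<le> u \<omega>" if "\<omega> \<in> space M" for i \<omega>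
        proof (rule incseq_le)
          show "incseq (\<lambda>i. U i \<omega>)" using seq(3) by (auto simp: incseq_def le_fun_def)
          show "(\<lambda>i. U i \<omega>) \<longlonglongrightarrow> u \<omega>" using seq(4) that spB by auto
        qed
        have Ub: "\<forall>\<omega>\<in>space M. U i \<omega> \<le> C" for i
        proof
          fix \<omega> assume w: "\<omega> \<in> space M"
          have "U i \<omega> \<le> u \<omega>" using Ule[OF w] .
          also have "u \<omega> \<le> C" using bd w by blast
          finally show "U i \<omega> \<le> C" .
        qed
        have UL: "U i \<in> Linf M B" for i using Linf_bdd[of "U i" C] seq(1,2) Ub by blast
        have uL: "u \<in> Linf M B" using Linf_bdd[of u C] usp bd by blast
        have IH: "(\<integral>\<omega>. f \<omega> * x (U i) \<omega> \<partial>M) = (\<integral>\<omega>. g \<omega> * U i \<omega> \<partial>M)" for i using seq(5) Ub by blast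
        have Uabs: "AE \<omega> in M. \<bar>U i \<omega>\<bar> \<le> C" for i using Ub seq(2) by (intro AE_I2) auto
        have xb: "AE \<omega> in M. \<bar>x (U i) \<omega>\<bar> \<le> C" for i by (rule x_bound[OF UL Uabs])
        have conv: "AE \<omega> in M. incseq (\<lambda>n. x (U n) \<omega>) \<and> (\<lambda>n. x (U n) \<omega>) \<longlonglongrightarrow> x u \<omega>"
        proof -
          have "AE \<omega> in M. incseq (\<lambda>n. U n \<omega>)" using seq(3) by (intro AE_I2) (auto simp: incseq_def le_fun_def)
          moreover have "AE \<omega> in M. (\<lambda>n. U n \<omega>) \<longlonglongrightarrow> u \<omega>" using seq(4) spB by (intro AE_I2) auto
          ultimately show ?thesis
            by (intro mp[OF cb[unfolded cont_from_below_def, THEN spec[of _ U], THEN spec[of _ u]]] conjI allI UL uL)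
        qed
        have L1: "(\<lambda>i. \<integral>\<omega>. f \<omega> * x (U i) \<omega> \<partial>M) \<longlonglongrightarrow> (\<integral>\<omega>. f \<omega> * x u \<omega> \<partial>M)"
        proof (rule integral_dominated_convergence[where w="\<lambda>\<omega>. \<bar>f \<omega>\<bar> * C"])
          show "(\<lambda>\<omega>. f \<omega> * x u \<omega>) \<in> borel_measurable M" by (rule meas_fx[OF uL])
          show "(\<lambda>\<omega>. f \<omega> * x (U i) \<omega>) \<in> borel_measurable M" for i by (rule meas_fx[OF UL])
          show "integrable M (\<lambda>\<omega>. \<bar>f \<omega>\<bar> * C)" by (intro integrable_mult_left integrable_abs fint)
          show "AE \<omega> in M. (\<lambda>i. f \<omega> * x (U i) \<omega>) \<longlonglongrightarrow> f \<omega> * x u \<omega>" using conv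
            by eventually_elim (rule tendsto_mult[OF tendsto_const], blast)
          show "AE \<omega> in M. norm (f \<omega> * x (U i) \<omega>) \<le> \<bar>f \<omega>\<bar> * C" for i using xb[of i]
          proof eventually_elim
            case (elim \<omega>)
            show ?case unfolding real_norm_def abs_mult by (rule mult_left_mono[OF elim]) simp
          qed
        qed
        have L2: "(\<lambda>i. \<integral>\<omega>. g \<omega> * U i \<omega> \<partial>M) \<longlonglongrightarrow> (\<integral>\<omega>. g \<omega> * u \<omega> \<partial>M)"
        proof (rule integral_dominated_convergence[where w="\<lambda>\<omega>. \<bar>g \<omega>\<bar> * C"])
          show "(\<lambda>\<omega>. g \<omega> * u \<omega>) \<in> borel_measurable M"
            by (intro borel_measurable_times gM Linf_measM[OF subB uL])
          show "(\<lambda>\<omega>. g \<omega> * U i \<omega>) \<in> borel_measurable M" for i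
            by (intro borel_measurable_times gM Linf_measM[OF subB UL])
          show "integrable M (\<lambda>\<omega>. \<bar>g \<omega>\<bar> * C)" by (intro integrable_mult_left integrable_abs gint)
          show "AE \<omega> in M. (\<lambda>i. g \<omega> * U i \<omega>) \<longlonglongrightarrow> g \<omega> * u \<omega>"
          proof (rule AE_I2)
            fix \<omega> assume "\<omega> \<in> space M"
            then have "(\<lambda>i. U i \<omega>) \<longlonglongrightarrow> u \<omega>" using seq(4) spB by simp
            then show "(\<lambda>i. g \<omega> * U i \<omega>) \<longlonglongrightarrow> g \<omega> * u \<omega>" by (rule tendsto_mult[OF tendsto_const])
          qed
          show "AE \<omega> in M. norm (g \<omega> * U i \<omega>) \<le> \<bar>g \<omega>\<bar> * C" for i using Uabs[of i]
          proof eventually_elim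
            case (elim \<omega>)
            show ?case unfolding real_norm_def abs_mult by (rule mult_left_mono[OF elim]) simp
          qed
        qed
        show "(\<integral>\<omega>. f \<omega> * x u \<omega> \<partial>M) = (\<integral>\<omega>. g \<omega> * u \<omega> \<partial>M)"
          using LIMSEQ_unique[OF L1[unfolded IH] L2] .
      qed
    qed
  qed
qed

end


context posctx begin

lemma repr_pos: "\<exists>g\<in>L1 M B. \<forall>X\<in>Linf M B. (\<integral>\<omega>. f \<omega> * x X \<omega> \<partial>M) = (\<integral>\<omega>. g \<omega> * X \<omega> \<partial>M)"
proof -
  obtain g where gL1: "g \<in> L1 M B" and H: "\<And>u C. u \<in> borel_measurable B \<Longrightarrow> (\<forall>\<omega>. 0 \<le> u \<omega>) \<Longrightarrow>
      (\<forall>\<omega>\<in>space M. u \<omega> \<le> C) \<Longrightarrow> (\<integral>\<omega>. f \<omega> * x u \<omega> \<partial>M) = (\<integral>\<omega>. g \<omega> * u \<omega> \<partial>M)"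
    using exists_g by blast
  have gint: "integrable M g" using gL1 by (simp add: L1_def)
  have gM: "g \<in> borel_measurable M" using gint by simp
  show ?thesis
  proof (intro bexI[OF _ gL1] ballI)
    fix X assume XL: "X \<in> Linf M B"
    have XB[measurable]: "X \<in> borel_measurable B" using XL by (rule Linf_meas)
    obtain C0 where C0: "AE \<omega> in M. \<bar>X \<omega>\<bar> \<le> C0" using XL Linf_bnd by blast
    define C where "C = \<bar>C0\<bar>"
    have C: "AE \<omega> in M. \<bar>X \<omega>\<bar> \<le> C" using C0 unfolding C_def by eventually_elim simp
    have Cpos: "0 \<le> C" unfolding C_def by simp
    define Xt where "Xt \<omega> = max (-C) (min C (X \<omega>))" for \<omega>
    define Xp where "Xp \<omega> = max (Xt \<omega>) 0" for \<omega>
    define Xn where "Xn \<omega> = max (- Xt \<omega>) 0" for \<omega>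
    have XpB: "Xp \<in> borel_measurable B" unfolding Xp_def Xt_def by measurable
    have XnB: "Xn \<in> borel_measurable B" unfolding Xn_def Xt_def by measurable
    have XtB: "Xt \<in> borel_measurable B" unfolding Xt_def by measurable
    have Xpb: "\<forall>\<omega>\<in>space M. Xp \<omega> \<le> C" and Xnb: "\<forall>\<omega>\<in>space M. Xn \<omega> \<le> C"
      using Cpos unfolding Xp_def Xn_def Xt_def by auto
    have Xpp: "\<forall>\<omega>. 0 \<le> Xp \<omega>" and Xnp: "\<forall>\<omega>. 0 \<le> Xn \<omega>" unfolding Xp_def Xn_def by auto
    have Xtpn: "Xt = (\<lambda>\<omega>. Xp \<omega> - Xn \<omega>)" unfolding Xp_def Xn_def by (rule ext) (simp add: max_def)
    have XpL: "Xp \<in> Linf M B" using Xpb Xpp by (intro LinfI[OF XpB, where C=C] AE_I2) auto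
    have XnL: "Xn \<in> Linf M B" using Xnb Xnp by (intro LinfI[OF XnB, where C=C] AE_I2) auto
    have XtL: "Xt \<in> Linf M B" unfolding Xtpn by (rule Linf_diff[OF XpL XnL])
    have XXt: "AE \<omega> in M. X \<omega> = Xt \<omega>" using C unfolding Xt_def by eventually_elim (auto simp: abs_le_iff)
    have Ep: "(\<integral>\<omega>. f \<omega> * x Xp \<omega> \<partial>M) = (\<integral>\<omega>. g \<omega> * Xp \<omega> \<partial>M)" by (rule H[OF XpB Xpp Xpb])
    have En: "(\<integral>\<omega>. f \<omega> * x Xn \<omega> \<partial>M) = (\<integral>\<omega>. g \<omega> * Xn \<omega> \<partial>M)" by (rule H[OF XnB Xnp Xnb])
    have xX: "AE \<omega> in M. x X \<omega> = x Xp \<omega> - x Xn \<omega>"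
    proof -
      have "AE \<omega> in M. x X \<omega> = x Xt \<omega>" by (rule x_cong[OF XL XtL XXt])
      moreover have "AE \<omega> in M. x Xt \<omega> = x Xp \<omega> - x Xn \<omega>" unfolding Xtpn by (rule x_diff[OF XpL XnL])
      ultimately show ?thesis by eventually_elim simp
    qed
    have i1: "integrable M (\<lambda>\<omega>. f \<omega> * x Xp \<omega>)" "integrable M (\<lambda>\<omega>. f \<omega> * x Xn \<omega>)"
      by (rule integrable_mult_Linf[OF fint subA x_in[OF XpL]], rule integrable_mult_Linf[OF fint subA x_in[OF XnL]])
    have i2: "integrable M (\<lambda>\<omega>. g \<omega> * Xp \<omega>)" "integrable M (\<lambda>\<omega>. g \<omega> * Xn \<omega>)"
      by (rule integrable_mult_Linf[OF gint subB XpL], rule integrable_mult_Linf[OF gint subB XnL])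
    have "AE \<omega> in M. f \<omega> * x X \<omega> = f \<omega> * x Xp \<omega> - f \<omega> * x Xn \<omega>"
      using xX by eventually_elim (simp add: right_diff_distrib)
    then have "(\<integral>\<omega>. f \<omega> * x X \<omega> \<partial>M) = (\<integral>\<omega>. f \<omega> * x Xp \<omega> - f \<omega> * x Xn \<omega> \<partial>M)"
      by (rule integral_cong_AE[OF meas_fx[OF XL] borel_measurable_diff[OF meas_fx[OF XpL] meas_fx[OF XnL]]])
    also have "\<dots> = (\<integral>\<omega>. f \<omega> * x Xp \<omega> \<partial>M) - (\<integral>\<omega>. f \<omega> * x Xn \<omega> \<partial>M)"
      using i1 by (rule Bochner_Integration.integral_diff)
    also have "\<dots> = (\<integral>\<omega>. g \<omega> * Xp \<omega> \<partial>M) - (\<integral>\<omega>. g \<omega> * Xn \<omega> \<partial>M)" unfolding Ep En ..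
    also have "\<dots> = (\<integral>\<omega>. g \<omega> * Xp \<omega> - g \<omega> * Xn \<omega> \<partial>M)"
      using i2 by (rule Bochner_Integration.integral_diff[symmetric])
    also have "\<dots> = (\<integral>\<omega>. g \<omega> * X \<omega> \<partial>M)"
    proof (rule integral_cong_AE)
      show "(\<lambda>\<omega>. g \<omega> * Xp \<omega> - g \<omega> * Xn \<omega>) \<in> borel_measurable M"
        using i2 by (intro borel_measurable_diff) auto
      show "(\<lambda>\<omega>. g \<omega> * X \<omega>) \<in> borel_measurable M"
        by (intro borel_measurable_times gM Linf_measM[OF subB XL])
      show "AE \<omega> in M. g \<omega> * Xp \<omega> - g \<omega> * Xn \<omega> = g \<omega> * X \<omega>"
        using XXt by eventually_elim (simp add: Xtpn right_diff_distrib)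
    qed
    finally show "(\<integral>\<omega>. f \<omega> * x X \<omega> \<partial>M) = (\<integral>\<omega>. g \<omega> * X \<omega> \<partial>M)" .
  qed
qed

end

context opctx begin

lemma repr:
  assumes cb: "cont_from_below M B x" and f: "f \<in> L1 M A"
  shows "\<exists>g\<in>L1 M B. \<forall>X\<in>Linf M B. (\<integral>\<omega>. f \<omega> * x X \<omega> \<partial>M) = (\<integral>\<omega>. g \<omega> * X \<omega> \<partial>M)"
proof -
  define f1 where "f1 \<omega> = max (f \<omega>) 0" for \<omega>
  define f2 where "f2 \<omega> = max (- f \<omega>) 0" for \<omega>
  have fA[measurable]: "f \<in> borel_measurable A" and fint: "integrable M f" using f by (auto simp: L1_def)
  have f1L: "f1 \<in> L1 M A" unfolding L1_def f1_def using fint by (auto intro!: integrable_max)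
  have f2L: "f2 \<in> L1 M A" unfolding L1_def f2_def using fint by (auto intro!: integrable_max)
  have p1: "posctx M A B x f1"
    by (intro posctx.intro opctx_axioms posctx_axioms.intro cb f1L) (simp add: f1_def)
  have p2: "posctx M A B x f2"
    by (intro posctx.intro opctx_axioms posctx_axioms.intro cb f2L) (simp add: f2_def)
  obtain g1 where g1: "g1 \<in> L1 M B" "\<And>X. X \<in> Linf M B \<Longrightarrow> (\<integral>\<omega>. f1 \<omega> * x X \<omega> \<partial>M) = (\<integral>\<omega>. g1 \<omega> * X \<omega> \<partial>M)"
    using posctx.repr_pos[OF p1] by blast
  obtain g2 where g2: "g2 \<in> L1 M B" "\<And>X. X \<in> Linf M B \<Longrightarrow> (\<integral>\<omega>. f2 \<omega> * x X \<omega> \<partial>M) = (\<integral>\<omega>. g2 \<omega> * X \<omega> \<partial>M)"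
    using posctx.repr_pos[OF p2] by blast
  have g12: "(\<lambda>\<omega>. g1 \<omega> - g2 \<omega>) \<in> L1 M B" using g1 g2 by (auto simp: L1_def)
  show ?thesis
  proof (intro bexI[OF _ g12] ballI)
    fix X assume XL: "X \<in> Linf M B"
    have ff: "f \<omega> = f1 \<omega> - f2 \<omega>" for \<omega> unfolding f1_def f2_def by (simp add: max_def)
    have i1: "integrable M (\<lambda>\<omega>. f1 \<omega> * x X \<omega>)" "integrable M (\<lambda>\<omega>. f2 \<omega> * x X \<omega>)"
      using f1L f2L by (auto simp: L1_def intro!: integrable_mult_Linf[OF _ subA x_in[OF XL]])
    have i2: "integrable M (\<lambda>\<omega>. g1 \<omega> * X \<omega>)" "integrable M (\<lambda>\<omega>. g2 \<omega> * X \<omega>)"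
      using g1(1) g2(1) by (auto simp: L1_def intro!: integrable_mult_Linf[OF _ subB XL])
    have "(\<integral>\<omega>. f \<omega> * x X \<omega> \<partial>M) = (\<integral>\<omega>. f1 \<omega> * x X \<omega> - f2 \<omega> * x X \<omega> \<partial>M)"
      unfolding ff by (simp add: left_diff_distrib)
    also have "\<dots> = (\<integral>\<omega>. f1 \<omega> * x X \<omega> \<partial>M) - (\<integral>\<omega>. f2 \<omega> * x X \<omega> \<partial>M)"
      using i1 by (rule Bochner_Integration.integral_diff)
    also have "\<dots> = (\<integral>\<omega>. g1 \<omega> * X \<omega> \<partial>M) - (\<integral>\<omega>. g2 \<omega> * X \<omega> \<partial>M)" using g1(2)[OF XL] g2(2)[OF XL] by simp
    also have "\<dots> = (\<integral>\<omega>. g1 \<omega> * X \<omega> - g2 \<omega> * X \<omega> \<partial>M)"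
      using i2 by (rule Bochner_Integration.integral_diff[symmetric])
    also have "\<dots> = (\<integral>\<omega>. (g1 \<omega> - g2 \<omega>) * X \<omega> \<partial>M)" by (simp add: left_diff_distrib)
    finally show "(\<integral>\<omega>. f \<omega> * x X \<omega> \<partial>M) = (\<integral>\<omega>. (g1 \<omega> - g2 \<omega>) * X \<omega> \<partial>M)" .
  qed
qed

lemma below_weak:
  assumes cb: "cont_from_below M B x"
  shows "continuous_map (weak_star M B) (weak_star M A) x"
  unfolding weak_star_def[of M A]
proof (rule continuous_on_generated_topo)
  fix U assume "U \<in> {{X \<in> Linf M A. (\<integral>\<omega>. f \<omega> * X \<omega> \<partial>M) \<in> U} | f U. f \<in> L1 M A \<and> open U}"
  then obtain f V where U: "U = {X \<in> Linf M A. (\<integral>\<omega>. f \<omega> * X \<omega> \<partial>M) \<in> V}" and f: "f \<in> L1 M A" and V: "open V"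
    by blast
  obtain g where g: "g \<in> L1 M B" "\<forall>X\<in>Linf M B. (\<integral>\<omega>. f \<omega> * x X \<omega> \<partial>M) = (\<integral>\<omega>. g \<omega> * X \<omega> \<partial>M)"
    using repr[OF cb f] by blast
  have "x -` U \<inter> topspace (weak_star M B) = {X \<in> Linf M B. (\<integral>\<omega>. g \<omega> * X \<omega> \<partial>M) \<in> V}"
    unfolding topspace_weak_star U using g(2) x_in by auto
  moreover have "openin (weak_star M B) {X \<in> Linf M B. (\<integral>\<omega>. g \<omega> * X \<omega> \<partial>M) \<in> V}"
    unfolding weak_star_def
    by (rule topology_generated_by_Basis) (intro CollectI exI[of _ g] exI[of _ V], use g V in auto)
  ultimately show "openin (weak_star M B) (x -` U \<inter> topspace (weak_star M B))" by simp
next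
  have "\<Union> {{X \<in> Linf M A. (\<integral>\<omega>. f \<omega> * X \<omega> \<partial>M) \<in> U} | f U. f \<in> L1 M A \<and> open U} = Linf M A"
    using topspace_weak_star[of M A] unfolding weak_star_def topology_generated_by_topspace .
  then show "x ` topspace (weak_star M B) \<subseteq> \<Union> {{X \<in> Linf M A. (\<integral>\<omega>. f \<omega> * X \<omega> \<partial>M) \<in> U} | f U. f \<in> L1 M A \<and> open U}"
    using x_in by (auto simp: topspace_weak_star)
qed

end

theorem proposition3p14:
  fixes M A B :: "'a measure" and x :: "('a \<Rightarrow> real) \<Rightarrow> ('a \<Rightarrow> real)"
  assumes "prob_space M" and "complete_measure M"
    and "subalgebra M A" and "subalgebra M B" and "sets A \<subseteq> sets B"
    and "admissible_op M A B x"
  shows "(cont_from_below M B x \<longleftrightarrow> cont_from_above M B x)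
       \<and> (cont_from_above M B x \<longleftrightarrow> continuous_map (weak_star M B) (weak_star M A) x)"
proof -
  interpret opctx M A B x
    using assms by (intro opctx.intro) auto
  show ?thesis using below_above above_below weak_above below_weak by blast
qed


end
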